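(* Consider Algorithm ProxSAGA (described in the context) with minibatch size $b\le n$, $T\ge1$ iterations, and step size $\eta=\rho/L$, where $0<\rho<1/2$ satisfies $$\frac{16 n^2\rho^2}{b^3}+\rho\le 1 .$$ Then the output $x_a$ satisfies $$\mathbb E\big[\|\mathcal G_\eta(x_a)\|^2\big]\le \frac{2L\,(F(x^0)-F(x^* ))}{\rho(1-2\rho)\,T},$$ where $x^*$ is an optimal solution of $\min_x F(x)$.
   Context: Setting: Let $n,d\ge 1$ be integers and $[n]=\{1,\dots,n\}$. Let $f_1,\dots,f_n:\mathbb R^d\to\mathbb R$ be differentiable (possibly nonconvex) functions, each $L$-smooth for some $L>0$, i.e. $\|\nabla f_i(x)-\nabla f_i(y)\|\le L\|x-y\|$ for all $x,y\in\mathbb R^d$ and $i\in[n]$. Let $f=\frac1n\sum_{i=1}^n f_i$. Let $h:\mathbb R^d\to\mathbb R\cup\{+\infty\}$ be proper, lower semicontinuous and convex, with closed domain. Let $F=f+h$, and let $x^*$ be a global minimizer of $F$ on $\mathbb R^d$ (assumed to exist). For $\eta>0$, $\mathrm{prox}_{\eta h}(x):=\arg\min_{y\in\mathbb R^d}\big(h(y)+\frac1{2\eta}\|y-x\|^2\big)$, and the gradient mapping is $\mathcal G_\eta(x):=\frac1\eta\big[x-\mathrm{prox}_{\eta h}(x-\eta\nabla f(x))\big]$. Algorithm ProxSAGA$(x^0,T,b,\eta)$: Given $x^0\in\mathbb R^d$, positive integers $T,b$ and $\eta>0$, set $\alpha^0_i=x^0$ for all $i\in[n]$. For $t=0,1,\dots$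 let $g^t=\frac1n\sum_{i=1}^n\nabla f_i(\alpha^t_i)$. For $t=0,\dots,T-1$: draw two multisets $I_t,J_t$, each consisting of $b$ indices drawn independently and uniformly at random from $[n]$ (with replacement; $I_t$, $J_t$ independent of each other and of all previous draws); set $v^t=\frac1b\sum_{i\in I_t}\big(\nabla f_i(x^t)-\nabla f_i(\alpha^t_i)\big)+g^t$ and $x^{t+1}=\mathrm{prox}_{\eta h}(x^t-\eta v^t)$; set $\alpha^{t+1}_j=x^t$ for $j\in J_t$ and $\alpha^{t+1}_j=\alpha^t_j$ for $j\notin J_t$. The output $x_a$ is chosen uniformly at random from $\{x^0,\dots,x^{T-1}\}$. Expectations are over all randomness of the algorithm. *)

theory Defs
  imports "HOL-Analysis.Analysis" "HOL-Probability.Probability"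
begin

definition proper_fun :: "('a \<Rightarrow> ereal) \<Rightarrow> bool" where
  "proper_fun h \<longleftrightarrow> (\<forall>x. h x \<noteq> -\<infinity>) \<and> (\<exists>x. h x \<noteq> \<infinity>)"

definition lsc_fun :: "('a::topological_space \<Rightarrow> ereal) \<Rightarrow> bool" where
  "lsc_fun h \<longleftrightarrow> (\<forall>x. h x \<le> Liminf (at x) h)"

definition convex_ereal_fun :: "('a::real_vector \<Rightarrow> ereal) \<Rightarrow> bool" where
  "convex_ereal_fun h \<longleftrightarrow> (\<forall>x y t. 0 \<le> t \<and> t \<le> 1 \<longrightarrow>
      h ((1 - t) *\<^sub>R x + t *\<^sub>R y) \<le> ereal (1 - t) * h x + ereal t * h y)"

definition edom :: "('a \<Rightarrow> ereal) \<Rightarrow> 'a set" where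
  "edom h = {x. h x < \<infinity>}"

definition prox :: "real \<Rightarrow> ('a::real_normed_vector \<Rightarrow> ereal) \<Rightarrow> 'a \<Rightarrow> 'a" where
  "prox \<eta> h x = (SOME y. \<forall>z. h y + ereal (norm (y - x)^2 / (2*\<eta>))
                              \<le> h z + ereal (norm (z - x)^2 / (2*\<eta>)))"

definition full_grad :: "nat \<Rightarrow> (nat \<Rightarrow> 'a \<Rightarrow> 'a::real_vector) \<Rightarrow> 'a \<Rightarrow> 'a" where
  "full_grad n gf x = (1 / real n) *\<^sub>R (\<Sum>i<n. gf i x)"

definition grad_map :: "nat \<Rightarrow> (nat \<Rightarrow> 'a \<Rightarrow> 'a::real_normed_vector) \<Rightarrow> ('a \<Rightarrow> ereal) \<Rightarrow> real \<Rightarrow> 'a \<Rightarrow> 'a" where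
  "grad_map n gf h \<eta> x = (1 / \<eta>) *\<^sub>R (x - prox \<eta> h (x - \<eta> *\<^sub>R full_grad n gf x))"

(* a multiset of b indices drawn i.i.d. uniformly from [n] = {..<n}, as a function {..<b} -> {..<n} *)
definition draw :: "nat \<Rightarrow> nat \<Rightarrow> (nat \<Rightarrow> nat) pmf" where
  "draw n b = Pi_pmf {..<b} 0 (\<lambda>_. pmf_of_set {..<n})"

definition saga_update :: "nat \<Rightarrow> nat \<Rightarrow> real \<Rightarrow> (nat \<Rightarrow> 'a \<Rightarrow> 'a::real_normed_vector) \<Rightarrow> ('a \<Rightarrow> ereal)
    \<Rightarrow> 'a \<times> (nat \<Rightarrow> 'a) \<Rightarrow> (nat \<Rightarrow> nat) \<Rightarrow> (nat \<Rightarrow> nat) \<Rightarrow> 'a \<times> (nat \<Rightarrow> 'a)" where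
  "saga_update n b \<eta> gf h s I J =
     (let x = fst s; \<alpha> = snd s;
          g = (1 / real n) *\<^sub>R (\<Sum>i<n. gf i (\<alpha> i));
          v = (1 / real b) *\<^sub>R (\<Sum>k<b. gf (I k) x - gf (I k) (\<alpha> (I k))) + g
      in (prox \<eta> h (x - \<eta> *\<^sub>R v), \<lambda>j. if j \<in> J ` {..<b} then x else \<alpha> j))"

definition saga_step :: "nat \<Rightarrow> nat \<Rightarrow> real \<Rightarrow> (nat \<Rightarrow> 'a \<Rightarrow> 'a::real_normed_vector) \<Rightarrow> ('a \<Rightarrow> ereal)
    \<Rightarrow> 'a \<times> (nat \<Rightarrow> 'a) \<Rightarrow> ('a \<times> (nat \<Rightarrow> 'a)) pmf" where
  "saga_step n b \<eta> gf h s =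
     map_pmf (\<lambda>(I, J). saga_update n b \<eta> gf h s I J) (pair_pmf (draw n b) (draw n b))"

(* distribution of ([x^0,...,x^{t-1}], (x^t, \<alpha>^t)) *)
primrec saga_traj :: "nat \<Rightarrow> nat \<Rightarrow> real \<Rightarrow> (nat \<Rightarrow> 'a \<Rightarrow> 'a::real_normed_vector) \<Rightarrow> ('a \<Rightarrow> ereal)
    \<Rightarrow> 'a \<Rightarrow> nat \<Rightarrow> ('a list \<times> ('a \<times> (nat \<Rightarrow> 'a))) pmf" where
  "saga_traj n b \<eta> gf h x0 0 = return_pmf ([], (x0, \<lambda>_. x0))"
| "saga_traj n b \<eta> gf h x0 (Suc t) =
     bind_pmf (saga_traj n b \<eta> gf h x0 t)
       (\<lambda>(xs, s). map_pmf (\<lambda>s'. (xs @ [fst s], s')) (saga_step n b \<eta> gf h s))"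

definition prox_saga :: "nat \<Rightarrow> nat \<Rightarrow> real \<Rightarrow> (nat \<Rightarrow> 'a \<Rightarrow> 'a::real_normed_vector) \<Rightarrow> ('a \<Rightarrow> ereal)
    \<Rightarrow> 'a \<Rightarrow> nat \<Rightarrow> 'a pmf" where
  "prox_saga n b \<eta> gf h x0 T =
     bind_pmf (saga_traj n b \<eta> gf h x0 T)
       (\<lambda>(xs, s). map_pmf (\<lambda>k. xs ! k) (pmf_of_set {..<T}))"

end

theory Submission imports Defs begin


lemma exp_bind_fin:
  fixes f :: "'b \<Rightarrow> real"
  assumes fM: "finite (set_pmf M)" and fN: "\<And>x. x \<in> set_pmf M \<Longrightarrow> finite (set_pmf (N x))"
  shows "measure_pmf.expectation (bind_pmf M N) f
       = measure_pmf.expectation M (\<lambda>x. measure_pmf.expectation (N x) f)"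
proof -
  let ?A = "\<Union>x\<in>set_pmf M. set_pmf (N x)"
  have fA: "finite ?A" using assms by auto
  have "measure_pmf.expectation (bind_pmf M N) f = (\<Sum>a\<in>?A. f a * pmf (bind_pmf M N) a)"
    by (rule integral_measure_pmf_real[OF fA]) (auto simp: set_bind_pmf)
  also have "\<dots> = (\<Sum>a\<in>?A. f a * (\<Sum>x\<in>set_pmf M. pmf (N x) a * pmf M x))"
    by (intro sum.cong refl arg_cong2[where f="(*)"], unfold pmf_bind,
        rule integral_measure_pmf_real[OF fM]) auto
  also have "\<dots> = (\<Sum>x\<in>set_pmf M. (\<Sum>a\<in>?A. f a * pmf (N x) a) * pmf M x)"
    by (simp add: sum_distrib_left sum_distrib_right sum.swap[of _ ?A] mult_ac)
  also have "\<dots> = (\<Sum>x\<in>set_pmf M. measure_pmf.expectation (N x) f * pmf M x)"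
    apply (intro sum.cong refl arg_cong2[where f="(*)"])
    apply (rule integral_measure_pmf_real[OF fA, symmetric]) by auto
  also have "\<dots> = measure_pmf.expectation M (\<lambda>x. measure_pmf.expectation (N x) f)"
    by (rule integral_measure_pmf_real[OF fM, symmetric]) auto
  finally show ?thesis .
qed

lemma finite_draw: "n \<ge> 1 \<Longrightarrow> finite (set_pmf (draw n b))"
proof -
  assume "n \<ge> 1"
  hence ne: "{..<n} \<noteq> {}" using lessThan_empty_iff by (metis not_one_le_zero)
  show ?thesis unfolding draw_def
    by (subst set_Pi_pmf) (auto intro!: finite_PiE_dflt simp: set_pmf_of_set[OF ne])
qed


lemma descent_single:
  fixes f :: "'a::real_inner \<Rightarrow> real" and g :: "'a \<Rightarrow> 'a"
  assumes grad: "\<And>x. GDERIV f x :> g x"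
    and lip: "\<And>x y. norm (g x - g y) \<le> L * norm (x - y)"
  shows "f y \<le> f x + inner (g x) (y - x) + L / 2 * norm (y - x)^2"
proof -
  define d where "d = y - x"
  define \<phi> where "\<phi> t = f (x + t *\<^sub>R d) - t * inner (g x) d - L/2 * t^2 * norm d ^2" for t
  have der: "DERIV \<phi> t :> (inner d (g (x + t *\<^sub>R d)) - inner (g x) d - L * t * norm d ^ 2)" for t
  proof -
    have d1: "((\<lambda>t. x + t *\<^sub>R d) has_derivative (\<lambda>s. s *\<^sub>R d)) (at t)"
      by (auto intro!: derivative_eq_intros)
    have d2: "(f has_derivative (\<lambda>h. inner h (g (x + t *\<^sub>R d)))) (at (x + t *\<^sub>R d))"
      using grad[of "x + t *\<^sub>R d"] unfolding gderiv_def .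
    have "((\<lambda>t. f (x + t *\<^sub>R d)) has_derivative (\<lambda>s. inner (s *\<^sub>R d) (g (x + t *\<^sub>R d)))) (at t)"
      using has_derivative_compose[OF d1 d2] by simp
    hence "DERIV (\<lambda>t. f (x + t *\<^sub>R d)) t :> inner d (g (x + t *\<^sub>R d))"
      unfolding has_field_derivative_def
      by (simp add: mult.commute[of _ "inner d (g (x + t *\<^sub>R d))"] fun_eq_iff)
    thus ?thesis unfolding \<phi>_def
      by (auto intro!: derivative_eq_intros)
  qed
  have "\<phi> 1 \<le> \<phi> 0"
  proof (rule DERIV_nonpos_imp_nonincreasing[of 0 1])
    fix t :: real assume t: "0 \<le> t" "t \<le> 1"
    have "inner d (g (x + t *\<^sub>R d)) - inner (g x) d = inner (g (x + t *\<^sub>R d) - g x) d"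
      by (simp add: inner_diff_right inner_commute)
    also have "\<dots> \<le> norm (g (x + t *\<^sub>R d) - g x) * norm d"
      by (rule norm_cauchy_schwarz)
    also have "\<dots> \<le> (L * norm (t *\<^sub>R d)) * norm d"
      using lip[of "x + t *\<^sub>R d" x] by (intro mult_right_mono) auto
    also have "\<dots> = L * t * norm d ^ 2" using t by (simp add: power2_eq_square)
    finally show "\<exists>y. DERIV \<phi> t :> y \<and> y \<le> 0" using der[of t] by (intro exI[of _ _]) auto
  qed simp
  thus ?thesis unfolding \<phi>_def d_def by (simp add: algebra_simps)
qed


definition lsc' :: "('a::topological_space \<Rightarrow> ereal) \<Rightarrow> bool" where
  "lsc' g \<longleftrightarrow> (\<forall>x c. ereal c < g x \<longrightarrow> eventually (\<lambda>z. ereal c < g z) (nhds x))"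

lemma lsc_fun_lsc': "lsc_fun h \<Longrightarrow> lsc' h"
  unfolding lsc'_def lsc_fun_def
proof (intro allI impI)
  fix x c assume H: "\<forall>x. h x \<le> Liminf (at x) h" and c: "ereal c < h x"
  have "ereal c < Liminf (at x) h" using H c by (meson less_le_trans)
  hence "eventually (\<lambda>z. ereal c < h z) (at x)" by (rule less_LiminfD)
  thus "eventually (\<lambda>z. ereal c < h z) (nhds x)" using c by (simp add: eventually_nhds_conv_at)
qed

lemma lsc'_add_cont:
  fixes h :: "'a::metric_space \<Rightarrow> ereal"
  assumes "lsc' h" and q: "continuous_on UNIV q"
  shows "lsc' (\<lambda>z. h z + ereal (q z))"
  unfolding lsc'_def
proof (intro allI impI)
  fix x c assume c: "ereal c < h x + ereal (q x)"
  hence "ereal (c - q x) < h x"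
    by (cases "h x") auto
  then obtain a where a1: "ereal (c - q x) < ereal a" and a2: "ereal a < h x"
    using ereal_dense2 by blast
  have e1: "eventually (\<lambda>z. ereal a < h z) (nhds x)" using assms(1) a2 unfolding lsc'_def by blast
  have "(q \<longlongrightarrow> q x) (at x)" using q by (simp add: continuous_on_def)
  moreover have ca: "c - a < q x" using a1 by simp
  ultimately have "eventually (\<lambda>z. c - a < q z) (at x)"
    by (rule order_tendstoD)
  hence e2: "eventually (\<lambda>z. c - a < q z) (nhds x)" using ca by (simp add: eventually_nhds_conv_at)
  show "eventually (\<lambda>z. ereal c < h z + ereal (q z)) (nhds x)"
    using e1 e2
  proof eventually_elim
    case (elim z) thus ?case by (cases "h z") auto
  qed
qed

lemma lsc'_closed: "lsc' g \<Longrightarrow> closed {z. g z \<le> ereal c}"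
  unfolding closed_def
proof -
  assume g: "lsc' g"
  have "open {z. ereal c < g z}"
  proof (subst open_subopen, intro ballI)
    fix x assume "x \<in> {z. ereal c < g z}"
    hence "eventually (\<lambda>z. ereal c < g z) (nhds x)" using g unfolding lsc'_def by auto
    thus "\<exists>T. open T \<and> x \<in> T \<and> T \<subseteq> {z. ereal c < g z}"
      unfolding eventually_nhds by auto
  qed
  moreover have "- {z. g z \<le> ereal c} = {z. ereal c < g z}" by auto
  ultimately show "open (- {z. g z \<le> ereal c})" by simp
qed

lemma lsc'_min_compact:
  fixes g :: "'a::metric_space \<Rightarrow> ereal"
  assumes g: "lsc' g" and K: "compact K" "K \<noteq> {}"
  shows "\<exists>y\<in>K. \<forall>z\<in>K. g y \<le> g z"
proof (cases "(INF z\<in>K. g z) = \<infinity>")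
  case True
  then obtain y where "y \<in> K" using K by auto
  moreover have "\<forall>z\<in>K. g z = \<infinity>" proof
    fix z assume "z \<in> K"
    hence "(INF z\<in>K. g z) \<le> g z" by (rule INF_lower)
    thus "g z = \<infinity>" using True by simp
  qed
  ultimately show ?thesis by auto
next
  case False
  define m where "m = (INF z\<in>K. g z)"
  define S where "S c = K \<inter> {z. g z \<le> ereal c}" for c
  have "K \<inter> \<Inter>(S ` {c. m < ereal c}) \<noteq> {}"
  proof (rule compact_imp_fip[OF K(1)])
    fix T assume "T \<in> S ` {c. m < ereal c}"
    thus "closed T" unfolding S_def using lsc'_closed[OF g] compact_imp_closed[OF K(1)] by auto
  next
    fix F' assume F': "finite F'" "F' \<subseteq> S ` {c. m < ereal c}"
    then obtain C where C: "C \<subseteq> {c. m < ereal c}" "finite C" "F' = S ` C"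
      using finite_subset_image by metis
    show "K \<inter> \<Inter>F' \<noteq> {}"
    proof (cases "C = {}")
      case True thus ?thesis using K C by auto
    next
      case False
      define c0 where "c0 = Min C"
      have "c0 \<in> C" using False C unfolding c0_def by auto
      hence "m < ereal c0" using C by auto
      then obtain z where z: "z \<in> K" "g z < ereal c0" unfolding m_def by (auto simp: INF_less_iff)
      have "z \<in> S c" if "c \<in> C" for c
      proof -
        have "c0 \<le> c" using that C unfolding c0_def by auto
        hence "g z \<le> ereal c" using z(2) by (meson ereal_less_eq(3) less_imp_le order_trans)
        thus ?thesis using z unfolding S_def by auto
      qed
      thus ?thesis using z C by auto
    qed
  qed
  then obtain y where y: "y \<in> K" "\<And>c. m < ereal c \<Longrightarrow> g y \<le> ereal c"
    unfolding S_def by (auto split: if_splits)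
  have "g y \<le> m"
  proof (rule ccontr)
    assume "\<not> g y \<le> m"
    then obtain c where "m < ereal c" "ereal c < g y" using ereal_dense2 by (meson not_le)
    thus False using y(2) by fastforce
  qed
  moreover have "m \<le> g z" if "z \<in> K" for z unfolding m_def using that by (rule INF_lower)
  ultimately show ?thesis using y(1) by (meson order_trans)
qed


lemma convex_lower_bound:
  fixes h :: "'a::euclidean_space \<Rightarrow> ereal"
  assumes cvx: "convex_ereal_fun h" and pr: "proper_fun h" and l: "lsc_fun h"
  shows "\<exists>z0 a K. h z0 \<noteq> \<infinity> \<and> K \<ge> 0 \<and> (\<forall>z. ereal (a - K * norm (z - z0)) \<le> h z)"
proof -
  obtain z0 where z0: "h z0 \<noteq> \<infinity>" using pr unfolding proper_fun_def by auto
  have nm: "h x \<noteq> -\<infinity>" for x using pr unfolding proper_fun_def by auto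
  obtain y1 where y1: "y1 \<in> cball z0 1" "\<And>z. z \<in> cball z0 1 \<Longrightarrow> h y1 \<le> h z"
    using lsc'_min_compact[OF lsc_fun_lsc'[OF l], of "cball z0 1"] by auto
  have "h y1 \<le> h z0" using y1 by auto
  then obtain a where a: "h y1 = ereal a" using z0 nm[of y1] by (cases "h y1") auto
  obtain h0 where h0: "h z0 = ereal h0" using z0 nm[of z0] by (cases "h z0") auto
  have ah0: "a \<le> h0" using \<open>h y1 \<le> h z0\<close> a h0 by simp
  define K where "K = h0 - a"
  have "ereal (a - K * norm (z - z0)) \<le> h z" for z
  proof (cases "norm (z - z0) \<le> 1")
    case True
    hence "h y1 \<le> h z" using y1(2)[of z] by (simp add: dist_norm norm_minus_commute)
    moreover have "a - K * norm (z - z0) \<le> a" using ah0 unfolding K_def by simp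
    ultimately show ?thesis using a by (metis ereal_less_eq(3) order_trans)
  next
    case False
    define r where "r = norm (z - z0)"
    have r1: "r > 1" using False r_def by simp
    define t where "t = 1 / r"
    have t: "0 \<le> t" "t \<le> 1" "t * r = 1" using r1 unfolding t_def by auto
    define p where "p = (1 - t) *\<^sub>R z0 + t *\<^sub>R z"
    have "p - z0 = t *\<^sub>R (z - z0)" unfolding p_def by (simp add: algebra_simps)
    hence "norm (p - z0) = 1" using t unfolding r_def by simp
    hence "p \<in> cball z0 1" by (simp add: dist_norm norm_minus_commute)
    hence "ereal a \<le> h p" using y1(2) a by metis
    also have "h p \<le> ereal (1 - t) * h z0 + ereal t * h z"
      using cvx t unfolding convex_ereal_fun_def p_def by blast
    finally have ineq: "ereal a \<le> ereal (1 - t) * h z0 + ereal t * h z" .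
    show ?thesis
    proof (cases "h z")
      case (real hz)
      have "a \<le> (1 - t) * h0 + t * hz" using ineq h0 real by simp
      hence "r * a \<le> r * ((1 - t) * h0 + t * hz)" using r1 by (intro mult_left_mono) auto
      hence "r * a \<le> (r - 1) * h0 + hz" using t by (simp add: algebra_simps)
      moreover have "(h0 - a) * r = r*h0 - r*a" by (simp add: algebra_simps)
      moreover have "(r - 1) * h0 = r*h0 - h0" by (simp add: algebra_simps)
      moreover have "K * r = (h0 - a) * r" using K_def by simp
      ultimately have "a - K * r \<le> hz" using r1 ah0 by argo
      thus ?thesis using real r_def by simp
    qed (use nm in auto)
  qed
  moreover have "K \<ge> 0" using ah0 K_def by simp
  ultimately show ?thesis using z0 by blast
qed

lemma prox_exists:
  fixes h :: "'a::euclidean_space \<Rightarrow> ereal"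
  assumes cvx: "convex_ereal_fun h" and pr: "proper_fun h" and l: "lsc_fun h" and eta: "\<eta> > 0"
  shows "\<exists>y. \<forall>z. h y + ereal (norm (y - w)^2 / (2*\<eta>)) \<le> h z + ereal (norm (z - w)^2 / (2*\<eta>))"
proof -
  obtain z0 a K where z0: "h z0 \<noteq> \<infinity>" and K: "K \<ge> 0" and lb: "\<And>z. ereal (a - K * norm (z - z0)) \<le> h z"
    using convex_lower_bound[OF cvx pr l] by blast
  have nm: "h x \<noteq> -\<infinity>" for x using pr unfolding proper_fun_def by auto
  obtain h0 where h0: "h z0 = ereal h0" using z0 nm[of z0] by (cases "h z0") auto
  define q where "q z = norm (z - w)^2 / (2*\<eta>)" for z
  define \<Psi> where "\<Psi> z = h z + ereal (q z)" for z
  define M where "M = h0 + q z0"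
  have PM: "\<Psi> z0 = ereal M" unfolding \<Psi>_def M_def h0 by simp
  define C where "C = M - a + K * norm (w - z0)"
  define R where "R = max 1 (2 * \<eta> * (K + \<bar>C\<bar> + 1))"
  have big: "ereal M < \<Psi> z" if zR: "R \<le> norm (z - w)" for z
  proof -
    define u where "u = norm (z - w)"
    have u1: "u \<ge> 1" and u2: "u / (2*\<eta>) \<ge> K + \<bar>C\<bar> + 1" using zR eta unfolding R_def u_def
      by (auto simp: field_simps)
    have "norm (z - z0) \<le> u + norm (w - z0)" unfolding u_def
      using norm_triangle_ineq[of "z - w" "w - z0"] by simp
    hence "K * norm (z - z0) \<le> K * (u + norm (w - z0))" using K by (rule mult_left_mono)
    moreover have "u * (u / (2*\<eta>) - K) \<ge> u * (\<bar>C\<bar> + 1)" using u1 u2 by (intro mult_left_mono) auto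
    moreover have "u * (\<bar>C\<bar> + 1) \<ge> \<bar>C\<bar> + 1" using mult_right_mono[OF u1, of "\<bar>C\<bar> + 1"] by simp
    moreover have "q z = u * (u / (2*\<eta>))" unfolding q_def u_def by (simp add: power2_eq_square)
    moreover have "u * (u / (2*\<eta>) - K) = u * (u / (2*\<eta>)) - K * u" by (simp add: right_diff_distrib mult.commute)
    moreover have "K * (u + norm (w - z0)) = K * u + K * norm (w - z0)" by (simp add: distrib_left)
    moreover have "C \<le> \<bar>C\<bar>" by simp
    ultimately have "M < a - K * norm (z - z0) + q z" using C_def by argo
    hence "ereal M < ereal (a - K * norm (z - z0)) + ereal (q z)" by simp
    also have "\<dots> \<le> \<Psi> z" unfolding \<Psi>_def by (intro add_right_mono lb)
    finally show ?thesis .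
  qed
  have cq: "continuous_on UNIV q" unfolding q_def using eta by (intro continuous_intros) auto
  have "R \<ge> 1" unfolding R_def by simp
  hence ne: "cball w R \<noteq> {}" by (simp add: cball_eq_empty)
  have "lsc' \<Psi>" unfolding \<Psi>_def by (rule lsc'_add_cont[OF lsc_fun_lsc'[OF l] cq])
  then obtain y where y: "y \<in> cball w R" "\<And>z. z \<in> cball w R \<Longrightarrow> \<Psi> y \<le> \<Psi> z"
    using lsc'_min_compact[of \<Psi> "cball w R"] ne by auto
  have z0in: "z0 \<in> cball w R"
  proof (rule ccontr)
    assume "z0 \<notin> cball w R"
    hence "R \<le> norm (z0 - w)" by (simp add: dist_norm norm_minus_commute)
    from big[OF this] PM show False by simp
  qed
  have "\<Psi> y \<le> \<Psi> z" for z
  proof (cases "z \<in> cball w R")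
    case False
    hence "R \<le> norm (z - w)" by (simp add: dist_norm norm_minus_commute)
    hence "ereal M < \<Psi> z" by (rule big)
    moreover have "\<Psi> y \<le> ereal M" using y(2)[OF z0in] PM by simp
    ultimately show ?thesis by simp
  qed (use y in auto)
  thus ?thesis unfolding \<Psi>_def q_def by blast
qed


lemma norm_add_sq: "norm (a + b)^2 = norm a^2 + 2 * inner a b + norm (b::'a::real_inner)^2"
  by (simp add: power2_norm_eq_inner inner_add_left inner_add_right inner_commute)

lemma le_of_small:
  fixes E C :: real
  assumes "\<And>t. 0 < t \<Longrightarrow> t \<le> 1 \<Longrightarrow> E \<le> t * C"
  shows "E \<le> 0"
proof (rule ccontr)
  assume E: "\<not> E \<le> 0"
  show False
  proof (cases "C \<le> 0")
    case True thus False using assms[of 1] E by simp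
  next
    case False
    define t where "t = min 1 (E / (2*C))"
    have t: "0 < t" "t \<le> 1" using E False unfolding t_def by auto
    have "t * C \<le> (E / (2*C)) * C" using False unfolding t_def by (intro mult_right_mono) auto
    also have "\<dots> = E / 2" using False by simp
    finally show False using assms[OF t] E by simp
  qed
qed

locale hset =
  fixes h :: "'a::euclidean_space \<Rightarrow> ereal"
  assumes cvx: "convex_ereal_fun h" and pr: "proper_fun h" and l: "lsc_fun h"
begin

lemma nm: "h x \<noteq> -\<infinity>" using pr unfolding proper_fun_def by auto

lemma prox_min:
  assumes "\<eta> > 0"
  shows "h (prox \<eta> h w) + ereal (norm (prox \<eta> h w - w)^2 / (2*\<eta>)) \<le> h z + ereal (norm (z - w)^2 / (2*\<eta>))"
  using someI_ex[OF prox_exists[OF cvx pr l assms, of w]] unfolding prox_def by blast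

lemma prox_fin:
  assumes "\<eta> > 0"
  shows "h (prox \<eta> h w) \<noteq> \<infinity>"
proof
  assume inf: "h (prox \<eta> h w) = \<infinity>"
  obtain z0 where z0: "h z0 \<noteq> \<infinity>" using pr unfolding proper_fun_def by auto
  have "h (prox \<eta> h w) + ereal (norm (prox \<eta> h w - w)^2 / (2*\<eta>)) \<le> h z0 + ereal (norm (z0 - w)^2 / (2*\<eta>))"
    by (rule prox_min[OF assms])
  thus False using inf z0 nm[of z0] by (cases "h z0") auto
qed

lemma prox_three_point:
  assumes eta: "\<eta> > 0"
  shows "h (prox \<eta> h w) \<le> h z + ereal ((1/\<eta>) * inner (w - prox \<eta> h w) (prox \<eta> h w - z))"
proof -
  define y where "y = prox \<eta> h w"
  obtain hy where hy: "h y = ereal hy" using prox_fin[OF eta, of w] nm[of y] unfolding y_def by (cases "h (prox \<eta> h w)") auto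
  show ?thesis
  proof (cases "h z")
    case PInf thus ?thesis by simp
  next
    case MInf thus ?thesis using nm by simp
  next
    case (real hz)
    define q where "q v = norm (v - w)^2 / (2*\<eta>)" for v
    have key: "hy - hz - inner (y - w) (z - y) / \<eta> \<le> t * (norm (z - y)^2 / (2*\<eta>))"
      if t: "0 < t" "t \<le> 1" for t
    proof -
      define yt where "yt = (1 - t) *\<^sub>R y + t *\<^sub>R z"
      have "h yt \<le> ereal (1 - t) * h y + ereal t * h z"
        using cvx t unfolding convex_ereal_fun_def yt_def by auto
      hence a: "h yt \<le> ereal ((1 - t) * hy + t * hz)" using hy real by simp
      have b: "h y + ereal (q y) \<le> h yt + ereal (q yt)"
        using prox_min[OF eta, of w yt] unfolding y_def q_def .
      have c: "hy + q y \<le> (1 - t) * hy + t * hz + q yt"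
      proof -
        have "ereal (hy + q y) \<le> h yt + ereal (q yt)" using b hy by simp
        also have "\<dots> \<le> ereal ((1 - t) * hy + t * hz) + ereal (q yt)" using a by (rule add_right_mono)
        finally show ?thesis by simp
      qed
      have "yt - w = (y - w) + t *\<^sub>R (z - y)" unfolding yt_def by (simp add: algebra_simps)
      hence "norm (yt - w)^2 = norm ((y - w) + t *\<^sub>R (z - y))^2" by (rule arg_cong[where f="\<lambda>x. norm x ^ 2"])
      also have "\<dots> = norm (y - w)^2 + 2 * (t * inner (y - w) (z - y)) + t^2 * norm (z - y)^2"
        unfolding norm_add_sq by (simp add: power_mult_distrib)
      finally have "norm (yt - w)^2 = norm (y - w)^2 + 2 * (t * inner (y - w) (z - y)) + t^2 * norm (z - y)^2" .
      hence qyt: "q yt = q y + t * inner (y - w) (z - y) / \<eta> + t * (t * (norm (z - y)^2 / (2*\<eta>)))"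
        unfolding q_def using eta by (simp add: field_simps power2_eq_square)
      have "t * hy \<le> t * hz + t * inner (y - w) (z - y) / \<eta> + t * (t * (norm (z - y)^2 / (2*\<eta>)))"
        using c qyt by (simp add: algebra_simps)
      hence "t * (hy - hz - inner (y - w) (z - y) / \<eta>) \<le> t * (t * (norm (z - y)^2 / (2*\<eta>)))"
        by (simp add: algebra_simps)
      thus ?thesis using t(1) by (rule mult_left_le_imp_le)
    qed
    have "hy - hz - inner (y - w) (z - y) / \<eta> \<le> 0" using key by (rule le_of_small)
    moreover have "inner (y - w) (z - y) = inner (w - y) (y - z)"
      by (metis inner_minus_left inner_minus_right minus_diff_eq)
    ultimately show ?thesis using hy real unfolding y_def[symmetric] by simp
  qed
qed

end

lemma alg:
  fixes Fy Fx fgp pp pr wp wr rr fgr dd L \<eta> :: real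
  assumes e: "\<eta> > 0"
   and h1: "Fy \<le> Fx + fgp + L/2*pp + (1/\<eta>)*(-pp + pr - \<eta>*wp + \<eta>*wr) + (1/\<eta>)*(-rr - \<eta>*fgr)"
   and h2: "0 \<le> pp - 2*pr + rr - 2*\<eta>*(fgp - wp) + 2*\<eta>*(fgr - wr) + \<eta>^2*dd"
  shows "Fy \<le> Fx - rr/(2*\<eta>) + (L/2 - 1/(2*\<eta>))*pp + (\<eta>/2)*dd"
proof -
  have "0 \<le> (1/(2*\<eta>)) * (pp - 2*pr + rr - 2*\<eta>*(fgp - wp) + 2*\<eta>*(fgr - wr) + \<eta>^2*dd)"
    using h2 e by simp
  also have "\<dots> = pp/(2*\<eta>) - pr/\<eta> + rr/(2*\<eta>) - fgp + wp + fgr - wr + (\<eta>/2)*dd"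
    using e by (simp add: field_simps power2_eq_square)
  finally have A: "0 \<le> pp/(2*\<eta>) - pr/\<eta> + rr/(2*\<eta>) - fgp + wp + fgr - wr + (\<eta>/2)*dd" .
  have B: "(1/\<eta>)*(-pp + pr - \<eta>*wp + \<eta>*wr) + (1/\<eta>)*(-rr - \<eta>*fgr) = - pp/\<eta> + pr/\<eta> - wp + wr - rr/\<eta> - fgr"
    using e by (simp add: field_simps)
  have C: "(L/2 - 1/(2*\<eta>))*pp = L/2*pp - pp/(2*\<eta>)" by (simp add: algebra_simps)
  have D: "pp/\<eta> = 2*(pp/(2*\<eta>))" "rr/\<eta> = 2*(rr/(2*\<eta>))" by simp_all
  show ?thesis using h1 A B C D by linarith
qed


locale saga = hset h for h :: "'a::euclidean_space \<Rightarrow> ereal" +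
  fixes n b :: nat and L \<rho> :: real and f :: "nat \<Rightarrow> 'a \<Rightarrow> real" and gf :: "nat \<Rightarrow> 'a \<Rightarrow> 'a"
  assumes n1: "n \<ge> 1" and b1: "1 \<le> b" and bn: "b \<le> n" and Lp: "L > 0"
    and grad: "\<And>i x. i < n \<Longrightarrow> GDERIV (f i) x :> gf i x"
    and smooth: "\<And>i x y. i < n \<Longrightarrow> norm (gf i x - gf i y) \<le> L * norm (x - y)"
    and rho0: "0 < \<rho>" and rho1: "\<rho> < 1/2"
    and cond: "16 * real n ^ 2 * \<rho> ^ 2 / real b ^ 3 + \<rho> \<le> 1"
begin

definition "eta = \<rho> / L"
definition "fa x = (1 / real n) * (\<Sum>i<n. f i x)"
definition "Fr x = fa x + real_of_ereal (h x)"
abbreviation "fg \<equiv> full_grad n gf"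

lemma eta_pos: "eta > 0" unfolding eta_def using rho0 Lp by simp
lemma eta_L: "eta * L = \<rho>" unfolding eta_def using Lp by simp

lemma descent_avg: "fa y \<le> fa x + inner (fg x) (y - x) + L / 2 * norm (y - x)^2"
proof -
  have "(\<Sum>i<n. f i y) \<le> (\<Sum>i<n. f i x + inner (gf i x) (y - x) + L / 2 * norm (y - x)^2)"
    by (intro sum_mono descent_single[OF grad smooth]) auto
  also have "\<dots> = (\<Sum>i<n. f i x) + inner (\<Sum>i<n. gf i x) (y - x) + real n * (L / 2 * norm (y - x)^2)"
    by (simp add: sum.distrib inner_sum_left)
  finally have "(1 / real n) * (\<Sum>i<n. f i y) \<le> (1 / real n) * ((\<Sum>i<n. f i x) + inner (\<Sum>i<n. gf i x) (y - x) + real n * (L / 2 * norm (y - x)^2))"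
    by (intro mult_left_mono) auto
  thus ?thesis using n1 unfolding fa_def full_grad_def
    by (simp add: distrib_left inner_scaleR_left)
qed

lemma step_det:
  assumes hx: "h x \<noteq> \<infinity>" and y: "y = prox eta h (x - eta *\<^sub>R v)"
  shows "Fr y \<le> Fr x - (eta / 2) * norm (grad_map n gf h eta x)^2
                 + ((\<rho> - 1) / (2 * eta)) * norm (y - x)^2 + (eta / 2) * norm (fg x - v)^2"
proof -
  define yb where "yb = prox eta h (x - eta *\<^sub>R fg x)"
  define p where "p = y - x"
  define r where "r = yb - x"
  define d where "d = fg x - v"
  have P1: "h y \<le> h yb + ereal ((1/eta) * inner ((x - eta *\<^sub>R v) - y) (y - yb))"
    using prox_three_point[OF eta_pos, of "x - eta *\<^sub>R v" yb] unfolding y[symmetric] .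
  have P2: "h yb \<le> h x + ereal ((1/eta) * inner ((x - eta *\<^sub>R fg x) - yb) (yb - x))"
    using prox_three_point[OF eta_pos, of "x - eta *\<^sub>R fg x" x] unfolding yb_def[symmetric] .
  have S1: "fa y \<le> fa x + inner (fg x) (y - x) + L / 2 * norm (y - x)^2" by (rule descent_avg)
  obtain hy where hy: "h y = ereal hy" using prox_fin[OF eta_pos] nm y by (cases "h y") auto
  obtain hb where hb: "h yb = ereal hb" using prox_fin[OF eta_pos] nm yb_def by (cases "h yb") auto
  obtain hx' where hx': "h x = ereal hx'" using hx nm by (cases "h x") auto
  have P1': "hy \<le> hb + (1/eta) * (- inner p p + inner p r - eta * inner v p + eta * inner v r)"
    using P1 hy hb unfolding p_def r_def
    by (simp add: inner_diff_left inner_diff_right inner_commute algebra_simps)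
  have P2': "hb \<le> hx' + (1/eta) * (- inner r r - eta * inner (fg x) r)"
    using P2 hb hx' unfolding r_def
    by (simp add: inner_diff_left inner_diff_right inner_commute algebra_simps)
  have H1: "Fr y \<le> Fr x + inner (fg x) p + L/2 * inner p p + (1/eta)*(- inner p p + inner p r - eta * inner v p + eta * inner v r)
           + (1/eta)*(- inner r r - eta * inner (fg x) r)"
    using S1 P1' P2' hy hb hx' unfolding Fr_def p_def by (simp add: power2_norm_eq_inner)
  have "0 \<le> inner ((p - r) - eta *\<^sub>R d) ((p - r) - eta *\<^sub>R d)" by simp
  also have "\<dots> = inner p p - 2 * inner p r + inner r r - 2 * eta * (inner (fg x) p - inner v p)
      + 2 * eta * (inner (fg x) r - inner v r) + eta^2 * inner d d"
    unfolding d_def by (simp add: inner_diff_left inner_diff_right inner_commute algebra_simps power2_eq_square)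
  finally have H2: "0 \<le> inner p p - 2 * inner p r + inner r r - 2 * eta * (inner (fg x) p - inner v p)
      + 2 * eta * (inner (fg x) r - inner v r) + eta^2 * inner d d" .
  have "Fr y \<le> Fr x - inner r r / (2*eta) + (L/2 - 1/(2*eta)) * inner p p + (eta/2) * inner d d"
    by (rule alg[OF eta_pos H1 H2])
  moreover have "grad_map n gf h eta x = - (1/eta) *\<^sub>R r"
    unfolding grad_map_def r_def yb_def by (simp add: algebra_simps)
  hence "(eta / 2) * norm (grad_map n gf h eta x)^2 = inner r r / (2*eta)"
    using eta_pos by (simp add: power2_norm_eq_inner[symmetric] power2_eq_square field_simps)
  moreover have "(L/2 - 1/(2*eta)) = (\<rho> - 1) / (2 * eta)" using eta_pos eta_L
    by (simp add: field_simps) 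
  ultimately show ?thesis unfolding p_def d_def by (simp add: power2_norm_eq_inner)
qed

end


lemma exp_pair_fin:
  fixes \<phi> :: "_ \<Rightarrow> real"
  assumes "finite (set_pmf A)" "finite (set_pmf B)"
  shows "measure_pmf.expectation (pair_pmf A B) \<phi> = measure_pmf.expectation A (\<lambda>x. measure_pmf.expectation B (\<lambda>y. \<phi> (x, y)))"
  unfolding pair_pmf_def using assms
  by (subst exp_bind_fin) (auto simp: exp_bind_fin set_bind_pmf)

lemma exp_pair_swap:
  fixes \<phi> :: "_ \<Rightarrow> real"
  assumes "finite (set_pmf A)" "finite (set_pmf B)"
  shows "measure_pmf.expectation (pair_pmf A B) \<phi> = measure_pmf.expectation B (\<lambda>y. measure_pmf.expectation A (\<lambda>x. \<phi> (x, y)))"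
  by (subst pair_commute_pmf) (simp add: exp_pair_fin assms case_prod_beta)

lemma finite_Pi_pmf: "finite A \<Longrightarrow> (\<And>x. finite (set_pmf (p x))) \<Longrightarrow> finite (set_pmf (Pi_pmf A d p))"
  by (subst set_Pi_pmf) (auto intro!: finite_PiE_dflt)

lemma exp_Pi_step:
  fixes g :: "_ \<Rightarrow> real"
  assumes "finite (set_pmf U)"
  shows "measure_pmf.expectation (Pi_pmf {..<Suc b} d (\<lambda>_. U)) g
       = measure_pmf.expectation (Pi_pmf {..<b} d (\<lambda>_. U)) (\<lambda>I. measure_pmf.expectation U (\<lambda>y. g (I(b := y))))"
proof -
  have "{..<Suc b} = insert b {..<b}" by auto
  hence "Pi_pmf {..<Suc b} d (\<lambda>_. U) = map_pmf (\<lambda>(y,f). f(b:=y)) (pair_pmf U (Pi_pmf {..<b} d (\<lambda>_. U)))"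
    by (simp add: Pi_pmf_insert)
  thus ?thesis using assms
    by (simp add: exp_pair_swap finite_Pi_pmf case_prod_beta)
qed

lemma U_fin: "finite (set_pmf (pmf_of_set {..<n::nat}))" if "n \<ge> 1"
proof -
  have ne: "{..<n} \<noteq> {}" using that lessThan_empty_iff by (metis not_one_le_zero)
  show ?thesis by (simp add: set_pmf_of_set[OF ne])
qed

lemma exp_U: "n \<ge> 1 \<Longrightarrow> measure_pmf.expectation (pmf_of_set {..<n::nat}) g = (\<Sum>i<n. g i) / real n"
proof -
  assume "n \<ge> 1"
  hence ne: "{..<n} \<noteq> {}" using lessThan_empty_iff by (metis not_one_le_zero)
  show ?thesis by (subst integral_pmf_of_set[OF ne]) auto
qed

lemma var_draw:
  fixes Z :: "nat \<Rightarrow> 'a::real_inner"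
  assumes n: "n \<ge> 1" and z0: "(\<Sum>i<n. Z i) = 0"
  shows "measure_pmf.expectation (draw n b) (\<lambda>I. norm (\<Sum>k<b. Z (I k))^2) = real b * ((\<Sum>i<n. norm (Z i)^2) / real n)"
proof (induction b)
  case 0 thus ?case by (simp add: draw_def)
next
  case (Suc b)
  define \<sigma> where "\<sigma> = (\<Sum>i<n. norm (Z i)^2) / real n"
  have inner_eq: "measure_pmf.expectation (pmf_of_set {..<n}) (\<lambda>y. norm (\<Sum>k<Suc b. Z ((I(b := y)) k))^2)
        = norm (\<Sum>k<b. Z (I k))^2 + \<sigma>" for I
  proof -
    define S where "S = (\<Sum>k<b. Z (I k))"
    have "(\<Sum>k<Suc b. Z ((I(b := y)) k)) = S + Z y" for y
      unfolding S_def by (simp add: sum.lessThan_Suc)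
    hence "measure_pmf.expectation (pmf_of_set {..<n}) (\<lambda>y. norm (\<Sum>k<Suc b. Z ((I(b := y)) k))^2)
        = (\<Sum>y<n. norm S^2 + 2 * inner S (Z y) + norm (Z y)^2) / real n"
      using n by (simp add: exp_U norm_add_sq)
    also have "\<dots> = (real n * norm S^2 + 2 * inner S (\<Sum>y<n. Z y) + (\<Sum>y<n. norm (Z y)^2)) / real n"
      by (simp add: sum.distrib inner_sum_right sum_distrib_left)
    also have "\<dots> = norm S^2 + \<sigma>" using n z0 unfolding \<sigma>_def by (simp add: field_simps)
    finally show ?thesis unfolding S_def .
  qed
  have "measure_pmf.expectation (draw n (Suc b)) (\<lambda>I. norm (\<Sum>k<Suc b. Z (I k))^2)
      = measure_pmf.expectation (draw n b) (\<lambda>I. norm (\<Sum>k<b. Z (I k))^2 + \<sigma>)"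
    unfolding draw_def by (subst exp_Pi_step[OF U_fin[OF n]]) (rule Bochner_Integration.integral_cong[OF refl inner_eq])
  also have "\<dots> = measure_pmf.expectation (draw n b) (\<lambda>I. norm (\<Sum>k<b. Z (I k))^2) + \<sigma>"
    using finite_draw[OF n] by (subst Bochner_Integration.integral_add) (auto intro!: integrable_measure_pmf_finite)
  finally show ?case using Suc.IH unfolding \<sigma>_def by (simp add: add_divide_distrib algebra_simps)
qed

lemma hit_draw:
  assumes n: "n \<ge> 1" and i: "i < n"
  shows "measure_pmf.expectation (draw n b) (\<lambda>J. if i \<in> J ` {..<b} then A else B)
       = (1 - (1 - 1/real n)^b) * A + (1 - 1/real n)^b * B"
proof (induction b arbitrary: B)
  case 0 thus ?case by (simp add: draw_def)
next
  case (Suc b)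
  define q where "q = 1 - 1 / real n"
  have inner_eq: "measure_pmf.expectation (pmf_of_set {..<n}) (\<lambda>y. if i \<in> (J(b := y)) ` {..<Suc b} then A else B)
     = (if i \<in> J ` {..<b} then A else (1 - q) * A + q * B)" for J
  proof -
    have "(J(b := y)) ` {..<Suc b} = insert y (J ` {..<b})" for y
      by (auto simp: lessThan_Suc image_iff)
    hence "measure_pmf.expectation (pmf_of_set {..<n}) (\<lambda>y. if i \<in> (J(b := y)) ` {..<Suc b} then A else B)
        = (\<Sum>y<n. if i \<in> J ` {..<b} then A else if y = i then A else B) / real n"
      using n by (simp add: exp_U) (rule sum.cong; auto)
    also have "\<dots> = (if i \<in> J ` {..<b} then A else (1 - q) * A + q * B)"
    proof (cases "i \<in> J ` {..<b}")
      case False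
      have "(\<Sum>y<n. if y = i then A else B) = (\<Sum>y<n. B + (if y = i then A - B else 0))"
        by (intro sum.cong) auto
      also have "\<dots> = real n * B + (A - B)" using i by (simp add: sum.distrib)
      finally show ?thesis using False n unfolding q_def by (simp add: field_simps)
    qed (use n in simp)
    finally show ?thesis .
  qed
  have "measure_pmf.expectation (draw n (Suc b)) (\<lambda>J. if i \<in> J ` {..<Suc b} then A else B)
     = measure_pmf.expectation (draw n b) (\<lambda>J. if i \<in> J ` {..<b} then A else (1 - q) * A + q * B)"
    unfolding draw_def by (subst exp_Pi_step[OF U_fin[OF n]]) (rule Bochner_Integration.integral_cong[OF refl inner_eq])
  also have "\<dots> = (1 - q^b) * A + q^b * ((1 - q) * A + q * B)" using Suc.IH[of "(1 - q) * A + q * B"] unfolding q_def by simp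
  finally show ?case unfolding q_def by (simp add: algebra_simps)
qed


context saga begin

definition "vI x \<alpha> I = (1/real b) *\<^sub>R (\<Sum>k<b. gf (I k) x - gf (I k) (\<alpha> (I k))) + (1/real n) *\<^sub>R (\<Sum>i<n. gf i (\<alpha> i))"
definition "Dv s = (1/real n) * (\<Sum>i<n. norm (fst s - snd s i)^2)"

lemma upd_eq: "saga_update n b eta gf h (x, \<alpha>) I J
   = (prox eta h (x - eta *\<^sub>R vI x \<alpha> I), \<lambda>j. if j \<in> J ` {..<b} then x else \<alpha> j)"
  by (simp add: saga_update_def Let_def vI_def)

lemma var_bound:
  "measure_pmf.expectation (draw n b) (\<lambda>I. norm (fg x - vI x \<alpha> I)^2) \<le> L^2 / real b * Dv (x, \<alpha>)"
proof -
  define Y where "Y i = gf i x - gf i (\<alpha> i)" for i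
  define yb where "yb = (1/real n) *\<^sub>R (\<Sum>i<n. Y i)"
  define Z where "Z i = Y i - yb" for i
  have nyb: "real n *\<^sub>R yb = (\<Sum>i<n. Y i)" using n1 unfolding yb_def by simp
  have sz: "(\<Sum>i<n. Z i) = 0" unfolding Z_def using nyb by (simp add: sum_subtractf sum_constant_scaleR)
  have eq: "fg x - vI x \<alpha> I = - ((1/real b) *\<^sub>R (\<Sum>k<b. Z (I k)))" for I
  proof -
    have "(1/real b) *\<^sub>R (\<Sum>k<b. Z (I k)) = (1/real b) *\<^sub>R (\<Sum>k<b. Y (I k)) - yb"
      unfolding Z_def using b1 by (simp add: sum_subtractf scaleR_diff_right sum_constant_scaleR)
    moreover have "fg x = yb + (1/real n) *\<^sub>R (\<Sum>i<n. gf i (\<alpha> i))"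
      unfolding full_grad_def yb_def Y_def by (simp add: sum_subtractf scaleR_diff_right)
    ultimately show ?thesis unfolding vI_def Y_def by (simp add: algebra_simps)
  qed
  have "measure_pmf.expectation (draw n b) (\<lambda>I. norm (fg x - vI x \<alpha> I)^2)
      = measure_pmf.expectation (draw n b) (\<lambda>I. (1/real b)^2 * norm (\<Sum>k<b. Z (I k))^2)"
    unfolding eq by (intro Bochner_Integration.integral_cong refl) (simp add: power_mult_distrib power_divide)
  also have "\<dots> = (1/real b)^2 * (real b * ((\<Sum>i<n. norm (Z i)^2) / real n))"
    by (simp only: integral_mult_right_zero var_draw[OF n1 sz])
  also have "\<dots> = (1/real b) * ((\<Sum>i<n. norm (Z i)^2) / real n)"
    using b1 by (simp add: power2_eq_square)
  also have "\<dots> \<le> (1/real b) * ((\<Sum>i<n. norm (Y i)^2) / real n)"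
  proof -
    have "(\<Sum>i<n. norm (Z i)^2) = (\<Sum>i<n. norm (Y i)^2 - 2 * inner (Y i) yb + norm yb ^2)"
      unfolding Z_def by (intro sum.cong refl) (simp add: power2_norm_eq_inner inner_diff_left inner_diff_right inner_commute)
    also have "\<dots> = (\<Sum>i<n. norm (Y i)^2) - 2 * inner (\<Sum>i<n. Y i) yb + real n * norm yb ^2"
      by (simp add: sum_subtractf sum.distrib inner_sum_left sum_distrib_left)
    also have "\<dots> = (\<Sum>i<n. norm (Y i)^2) - real n * norm yb ^2"
      unfolding nyb[symmetric] by (simp add: power2_norm_eq_inner)
    also have "\<dots> \<le> (\<Sum>i<n. norm (Y i)^2)" by simp
    finally show ?thesis using b1 n1 by (intro mult_left_mono divide_right_mono) auto
  qed
  also have "\<dots> \<le> (1/real b) * ((\<Sum>i<n. L^2 * norm (x - \<alpha> i)^2) / real n)"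
  proof -
    have "(\<Sum>i<n. norm (Y i)^2) \<le> (\<Sum>i<n. L^2 * norm (x - \<alpha> i)^2)"
    proof (intro sum_mono)
      fix i assume "i \<in> {..<n}"
      hence "norm (Y i) \<le> L * norm (x - \<alpha> i)" unfolding Y_def using smooth by auto
      hence "norm (Y i)^2 \<le> (L * norm (x - \<alpha> i))^2" by (intro power_mono) auto
      thus "norm (Y i)^2 \<le> L^2 * norm (x - \<alpha> i)^2" by (simp add: power_mult_distrib)
    qed
    thus ?thesis using b1 n1 by (intro mult_left_mono divide_right_mono) auto
  qed
  also have "\<dots> = L^2 / real b * Dv (x, \<alpha>)"
    unfolding Dv_def by (simp add: sum_distrib_left[symmetric])
  finally show ?thesis .
qed

end


lemma exp_mono_fin:
  fixes f g :: "_ \<Rightarrow> real"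
  shows "finite (set_pmf M) \<Longrightarrow> (\<And>x. x \<in> set_pmf M \<Longrightarrow> f x \<le> g x) \<Longrightarrow>
    measure_pmf.expectation M f \<le> measure_pmf.expectation M g"
  by (intro integral_mono_AE) (auto intro: integrable_measure_pmf_finite simp: AE_measure_pmf_iff)

lemma exp_affine:
  fixes f :: "_ \<Rightarrow> real"
  shows "finite (set_pmf M) \<Longrightarrow> measure_pmf.expectation M (\<lambda>x. a + c * f x) = a + c * measure_pmf.expectation M f"
  by (simp add: Bochner_Integration.integral_add integrable_measure_pmf_finite)

lemma quad:
  fixes q p a bb :: real
  assumes "0 \<le> q" "q \<le> 1 - p" "0 < p" "p \<le> 1/2" "0 \<le> a" "0 \<le> bb"
  shows "(1 - q) * a^2 + q * (a + bb)^2 \<le> (2/p) * a^2 + (1 - p/2) * bb^2"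
proof -
  have sq: "0 \<le> (p/2) * (bb - (2*q/p) * a)^2" using assms by simp
  have e1: "(p/2) * (bb - (2*q/p) * a)^2 = (p/2)*bb^2 - 2*q*a*bb + (2*q^2/p)*a^2"
    using assms by (simp add: power2_eq_square field_simps)
  have e2: "q * (a + bb)^2 = q*a^2 + 2*q*a*bb + q*bb^2" by (simp add: power2_eq_square algebra_simps)
  have q2: "q^2 \<le> (1 - p)^2" using assms by (intro power_mono) auto
  have "2 * q^2 / p \<le> 2 * (1 - p)^2 / p" using q2 assms by (intro divide_right_mono) auto
  moreover have "1 + 2 * (1 - p)^2 / p \<le> 2 / p"
  proof -
    have "p * (2*p - 3) \<le> 0" using assms by (intro mult_nonneg_nonpos) auto
    moreover have "p + 2*(1-p)^2 = 2 + p*(2*p - 3)" by (simp add: power2_eq_square algebra_simps)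
    ultimately have "p + 2 * (1 - p)^2 \<le> 2" by linarith
    hence "(p + 2 * (1 - p)^2) / p \<le> 2 / p" using assms by (intro divide_right_mono) auto
    moreover have "1 + 2*(1-p)^2/p = (p + 2*(1-p)^2)/p" using assms by (simp add: field_simps)
    ultimately show ?thesis by simp
  qed
  ultimately have c1: "1 + 2 * q^2 / p \<le> 2 / p" by linarith
  have "(1 - q) * a^2 + q * (a + bb)^2 \<le> (1 + 2*q^2/p) * a^2 + (q + p/2) * bb^2"
    using sq e1 e2 by (simp add: algebra_simps)
  also have "\<dots> \<le> (2/p) * a^2 + (1 - p/2) * bb^2"
    using c1 assms by (intro add_mono mult_right_mono) auto
  finally show ?thesis .
qed

lemma q_bound:
  assumes "n \<ge> 1" "b \<le> n"
  shows "(1 - 1/real n)^b \<le> 1 - real b / (2 * real n)"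
proof -
  define x where "x = 1 / real n"
  have x: "0 < x" "x \<le> 1" using assms unfolding x_def by auto
  have bx: "real b * x \<le> 1" using assms unfolding x_def by (simp add: field_simps)
  have "(1 - x)^b * (1 + x)^b = (1 - x^2)^b" by (simp add: power_mult_distrib[symmetric] power2_eq_square algebra_simps)
  also have "\<dots> \<le> 1" using x by (intro power_le_one) (auto simp: power_le_one)
  finally have A: "(1 - x)^b * (1 + x)^b \<le> 1" .
  have B: "1 + real b * x \<le> (1 + x)^b" using x by (intro Bernoulli_inequality) auto
  have "(1 - x)^b * (1 + real b * x) \<le> (1 - x)^b * (1 + x)^b"
    using B x by (intro mult_left_mono) auto
  with A have C: "(1 - x)^b * (1 + real b * x) \<le> 1" by linarith
  have D: "(1 - real b * x / 2) * (1 + real b * x) \<ge> 1"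
  proof -
    define y where "y = real b * x"
    have "(y/2)*(1-y) \<ge> 0" using bx x unfolding y_def by (intro mult_nonneg_nonneg) auto
    moreover have "(1 - y/2)*(1+y) = 1 + (y/2)*(1-y)" by (simp add: field_simps)
    ultimately show ?thesis unfolding y_def by linarith
  qed
  have "(1 - x)^b \<le> 1 - real b * x / 2"
  proof -
    have pos: "1 + real b * x > 0" using x by (simp add: add_pos_nonneg)
    have "(1 - x)^b \<le> 1 / (1 + real b * x)" using C pos by (simp add: field_simps)
    also have "\<dots> \<le> 1 - real b * x / 2" using D pos by (simp add: field_simps)
    finally show ?thesis .
  qed
  thus ?thesis unfolding x_def by simp
qed


context saga begin

definition "cc = eta * L^2 * 2 * real n / real b ^ 2"
definition "Phi s = Fr (fst s) + cc * Dv s"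
definition "p0 = real b / (2 * real n)"
definition "qq = (1 - 1/real n)^b"

lemma p0_facts: "0 < p0" "p0 \<le> 1/2"
  using n1 b1 bn unfolding p0_def by (auto simp: field_simps)

lemma qq_facts: "0 \<le> qq" "qq \<le> 1 - p0"
  using q_bound[OF n1 bn] n1 unfolding qq_def p0_def by (auto simp: field_simps)

lemma cc_nonneg: "cc \<ge> 0" unfolding cc_def using eta_pos by simp

lemma coef1: "(\<rho> - 1) / (2 * eta) + cc * (2 / p0) \<le> 0"
proof -
  have e: "cc * (2 / p0) = 8 * (eta * L)^2 * real n ^ 2 / real b ^ 3 / eta"
    unfolding cc_def p0_def using eta_pos n1 b1 by (simp add: field_simps power2_eq_square power3_eq_cube)
  have c: "16 * real n ^ 2 * \<rho> ^ 2 / real b ^ 3 \<le> 1 - \<rho>" using cond by simp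
  have "(\<rho> - 1) / (2 * eta) + cc * (2 / p0) = ((\<rho> - 1) + 16 * real n ^ 2 * \<rho> ^ 2 / real b ^ 3) / (2 * eta)"
    unfolding e eta_L using eta_pos by (simp add: field_simps)
  also have "\<dots> \<le> 0" using c eta_pos by (intro divide_nonpos_pos) auto
  finally show ?thesis .
qed

lemma coef2: "cc * (1 - p0/2) + (eta/2) * (L^2 / real b) = cc"
  unfolding cc_def p0_def using n1 b1 by (simp add: field_simps power2_eq_square)

lemma finite_step: "finite (set_pmf (saga_step n b eta gf h s))"
  unfolding saga_step_def using finite_draw[OF n1] by simp

lemma step_fin: "s' \<in> set_pmf (saga_step n b eta gf h s) \<Longrightarrow> h (fst s') \<noteq> \<infinity>"
  unfolding saga_step_def by (auto simp: saga_update_def Let_def prox_fin[OF eta_pos])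

lemma inner_step:
  assumes hx: "h x \<noteq> \<infinity>"
  shows "measure_pmf.expectation (draw n b) (\<lambda>J. Phi (saga_update n b eta gf h (x, \<alpha>) I J))
      \<le> Fr x - (eta/2) * norm (grad_map n gf h eta x)^2 + (eta/2) * norm (fg x - vI x \<alpha> I)^2 + cc * (1 - p0/2) * Dv (x, \<alpha>)"
proof -
  define y where "y = prox eta h (x - eta *\<^sub>R vI x \<alpha> I)"
  define A where "A = norm (y - x)^2"
  have pt: "Phi (saga_update n b eta gf h (x, \<alpha>) I J) = Fr y + cc * ((1/real n) * (\<Sum>i<n. (if i \<in> J ` {..<b} then A else norm (y - \<alpha> i)^2)))" for J
    unfolding upd_eq Phi_def Dv_def fst_conv snd_conv y_def[symmetric] A_def
    by (intro arg_cong[where f="\<lambda>s. Fr y + cc * ((1/real n) * s)"] sum.cong refl) simp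
  have "measure_pmf.expectation (draw n b) (\<lambda>J. Phi (saga_update n b eta gf h (x, \<alpha>) I J))
     = Fr y + cc * ((1/real n) * (\<Sum>i<n. measure_pmf.expectation (draw n b) (\<lambda>J. if i \<in> J ` {..<b} then A else norm (y - \<alpha> i)^2)))"
    unfolding pt using finite_draw[OF n1]
    by (simp add: exp_affine integral_mult_right_zero integrable_measure_pmf_finite)
  also have "\<dots> = Fr y + cc * ((1/real n) * (\<Sum>i<n. (1 - qq) * A + qq * norm (y - \<alpha> i)^2))"
    using hit_draw[OF n1] unfolding qq_def by simp
  also have "\<dots> \<le> Fr y + cc * ((1/real n) * (\<Sum>i<n. (2/p0) * A + (1 - p0/2) * norm (x - \<alpha> i)^2))"
  proof -
    have "(1 - qq) * A + qq * norm (y - \<alpha> i)^2 \<le> (2/p0) * A + (1 - p0/2) * norm (x - \<alpha> i)^2" for i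
    proof -
      have "norm (y - \<alpha> i) \<le> norm (y - x) + norm (x - \<alpha> i)"
        using norm_triangle_ineq[of "y - x" "x - \<alpha> i"] by simp
      hence "norm (y - \<alpha> i)^2 \<le> (norm (y - x) + norm (x - \<alpha> i))^2" by (intro power_mono) auto
      hence "qq * norm (y - \<alpha> i)^2 \<le> qq * (norm (y - x) + norm (x - \<alpha> i))^2"
        using qq_facts by (intro mult_left_mono) auto
      moreover have "(1 - qq) * (norm (y - x))^2 + qq * (norm (y - x) + norm (x - \<alpha> i))^2
          \<le> (2/p0) * (norm (y - x))^2 + (1 - p0/2) * norm (x - \<alpha> i)^2"
        using qq_facts p0_facts by (intro quad) auto
      ultimately show ?thesis unfolding A_def by linarith
    qed
    hence "(\<Sum>i<n. (1 - qq) * A + qq * norm (y - \<alpha> i)^2) \<le> (\<Sum>i<n. (2/p0) * A + (1 - p0/2) * norm (x - \<alpha> i)^2)"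
      by (intro sum_mono) auto
    thus ?thesis using cc_nonneg n1 by (intro add_left_mono mult_left_mono) auto
  qed
  also have "\<dots> = Fr y + cc * ((2/p0) * A + (1 - p0/2) * Dv (x, \<alpha>))"
  proof -
    have s: "(\<Sum>i<n. (2/p0) * A + (1 - p0/2) * norm (x - \<alpha> i)^2)
        = real n * ((2/p0) * A) + (1 - p0/2) * (\<Sum>i<n. norm (x - \<alpha> i)^2)"
      by (simp add: sum.distrib sum_distrib_left)
    have g: "(1/real n) * (real n * X + c * S) = X + c * ((1/real n) * S)" for X c S
      using n1 by (simp add: field_simps)
    show ?thesis unfolding s g Dv_def fst_conv snd_conv ..
  qed
  also have "\<dots> = Fr y + cc * (2/p0) * A + cc * (1 - p0/2) * Dv (x, \<alpha>)"
    by (simp add: algebra_simps)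
  also have "\<dots> \<le> Fr x - (eta/2) * norm (grad_map n gf h eta x)^2 + ((\<rho> - 1) / (2 * eta) + cc * (2/p0)) * A
        + (eta/2) * norm (fg x - vI x \<alpha> I)^2 + cc * (1 - p0/2) * Dv (x, \<alpha>)"
    using step_det[OF hx y_def] unfolding A_def by (simp add: algebra_simps)
  also have "\<dots> \<le> Fr x - (eta/2) * norm (grad_map n gf h eta x)^2
        + (eta/2) * norm (fg x - vI x \<alpha> I)^2 + cc * (1 - p0/2) * Dv (x, \<alpha>)"
  proof -
    have "((\<rho> - 1) / (2 * eta) + cc * (2/p0)) * A \<le> 0"
      using coef1 unfolding A_def by (intro mult_nonpos_nonneg) auto
    thus ?thesis by linarith
  qed
  finally show ?thesis .
qed

lemma step_exp:
  assumes hx: "h x \<noteq> \<infinity>"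
  shows "measure_pmf.expectation (saga_step n b eta gf h (x, \<alpha>)) Phi
     \<le> Phi (x, \<alpha>) - (eta/2) * norm (grad_map n gf h eta x)^2"
proof -
  define K where "K = Fr x - (eta/2) * norm (grad_map n gf h eta x)^2 + cc * (1 - p0/2) * Dv (x, \<alpha>)"
  have "measure_pmf.expectation (saga_step n b eta gf h (x, \<alpha>)) Phi
      = measure_pmf.expectation (draw n b) (\<lambda>I. measure_pmf.expectation (draw n b) (\<lambda>J. Phi (saga_update n b eta gf h (x, \<alpha>) I J)))"
    unfolding saga_step_def using finite_draw[OF n1] by (simp add: exp_pair_fin case_prod_beta)
  also have "\<dots> \<le> measure_pmf.expectation (draw n b) (\<lambda>I. K + (eta/2) * norm (fg x - vI x \<alpha> I)^2)"
    using finite_draw[OF n1] inner_step[OF hx] unfolding K_def by (intro exp_mono_fin) (auto simp: algebra_simps)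
  also have "\<dots> = K + (eta/2) * measure_pmf.expectation (draw n b) (\<lambda>I. norm (fg x - vI x \<alpha> I)^2)"
    using finite_draw[OF n1] by (rule exp_affine)
  also have "\<dots> \<le> K + (eta/2) * (L^2 / real b * Dv (x, \<alpha>))"
    using var_bound eta_pos by (intro add_left_mono mult_left_mono) auto
  also have "\<dots> = Phi (x, \<alpha>) - (eta/2) * norm (grad_map n gf h eta x)^2"
  proof -
    have a: "(cc * (1 - p0/2) + (eta/2) * (L^2 / real b)) * Dv (x, \<alpha>) = cc * Dv (x, \<alpha>)" by (simp only: coef2)
    have b: "(cc * (1 - p0/2) + (eta/2) * (L^2 / real b)) * Dv (x, \<alpha>)
        = cc * (1 - p0/2) * Dv (x, \<alpha>) + (eta/2) * (L^2 / real b * Dv (x, \<alpha>))" by (simp add: algebra_simps)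
    have eq: "cc * (1 - p0/2) * Dv (x, \<alpha>) + (eta/2) * (L^2 / real b * Dv (x, \<alpha>)) = cc * Dv (x, \<alpha>)"
      by (rule trans[OF b[symmetric] a])
    show ?thesis unfolding K_def Phi_def using eq by simp
  qed
  finally show ?thesis .
qed

end


context saga begin

abbreviation "traj x0 t \<equiv> saga_traj n b eta gf h x0 t"
definition "SG xs = sum_list (map (\<lambda>x. norm (grad_map n gf h eta x)^2) xs)"

lemma traj_props:
  assumes hx0: "h x0 \<noteq> \<infinity>"
  shows "finite (set_pmf (traj x0 t)) \<and>
    (\<forall>z\<in>set_pmf (traj x0 t). h (fst (snd z)) \<noteq> \<infinity> \<and> length (fst z) = t) \<and>
    measure_pmf.expectation (traj x0 t) (\<lambda>z. Phi (snd z) + (eta/2) * SG (fst z)) \<le> Fr x0"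
proof (induction t)
  case 0
  have "Phi (x0, \<lambda>_. x0) = Fr x0" unfolding Phi_def Dv_def by simp
  thus ?case using hx0 by (simp add: SG_def)
next
  case (Suc t)
  from Suc.IH have fin: "finite (set_pmf (traj x0 t))"
    and sup: "\<And>z. z \<in> set_pmf (traj x0 t) \<Longrightarrow> h (fst (snd z)) \<noteq> \<infinity> \<and> length (fst z) = t"
    and ih: "measure_pmf.expectation (traj x0 t) (\<lambda>z. Phi (snd z) + (eta/2) * SG (fst z)) \<le> Fr x0"
    by auto
  define N where "N = (\<lambda>(xs, s). map_pmf (\<lambda>s'. (xs @ [fst s], s')) (saga_step n b eta gf h s))"
  have tr: "traj x0 (Suc t) = bind_pmf (traj x0 t) N" unfolding N_def by simp
  have finN: "finite (set_pmf (N z))" for z unfolding N_def using finite_step by (auto simp: case_prod_beta)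
  have f1: "finite (set_pmf (traj x0 (Suc t)))" unfolding tr using fin finN by (simp add: set_bind_pmf)
  have f2: "\<forall>z\<in>set_pmf (traj x0 (Suc t)). h (fst (snd z)) \<noteq> \<infinity> \<and> length (fst z) = Suc t"
    unfolding tr N_def using sup step_fin by (auto simp: set_bind_pmf case_prod_beta)
  have "measure_pmf.expectation (traj x0 (Suc t)) (\<lambda>z. Phi (snd z) + (eta/2) * SG (fst z))
      = measure_pmf.expectation (traj x0 t) (\<lambda>z. measure_pmf.expectation (N z) (\<lambda>z. Phi (snd z) + (eta/2) * SG (fst z)))"
    unfolding tr using fin finN by (rule exp_bind_fin)
  also have "\<dots> \<le> measure_pmf.expectation (traj x0 t) (\<lambda>z. Phi (snd z) + (eta/2) * SG (fst z))"
  proof (rule exp_mono_fin[OF fin])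
    fix z assume z: "z \<in> set_pmf (traj x0 t)"
    obtain xs x \<alpha> where zz: "z = (xs, (x, \<alpha>))" by (metis prod.collapse)
    have hx: "h x \<noteq> \<infinity>" using sup[OF z] zz by simp
    have "measure_pmf.expectation (N z) (\<lambda>z. Phi (snd z) + (eta/2) * SG (fst z))
        = measure_pmf.expectation (saga_step n b eta gf h (x, \<alpha>)) (\<lambda>s'. ((eta/2) * SG (xs @ [x])) + 1 * Phi s')"
      unfolding N_def zz by (simp add: add.commute)
    also have "\<dots> = (eta/2) * SG (xs @ [x]) + 1 * measure_pmf.expectation (saga_step n b eta gf h (x, \<alpha>)) Phi"
      using finite_step by (rule exp_affine)
    also have "\<dots> \<le> (eta/2) * SG (xs @ [x]) + (Phi (x, \<alpha>) - (eta/2) * norm (grad_map n gf h eta x)^2)"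
      using step_exp[OF hx] by simp
    also have "\<dots> = Phi (snd z) + (eta/2) * SG (fst z)"
      unfolding zz SG_def by (simp add: algebra_simps)
    finally show "measure_pmf.expectation (N z) (\<lambda>z. Phi (snd z) + (eta/2) * SG (fst z)) \<le> Phi (snd z) + (eta/2) * SG (fst z)" .
  qed
  finally show ?case using f1 f2 ih by auto
qed

end


context saga begin

lemma final_bound:
  assumes hx0: "h x0 \<noteq> \<infinity>" and T: "T \<ge> 1"
    and opt: "\<And>x. ereal (fa xstar) + h xstar \<le> ereal (fa x) + h x"
  shows "measure_pmf.expectation (prox_saga n b eta gf h x0 T) (\<lambda>x. norm (grad_map n gf h eta x)^2)
      \<le> 2 * L / (\<rho> * (1 - 2 * \<rho>) * real T) * (Fr x0 - Fr xstar)"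
proof -
  define g where "g x = norm (grad_map n gf h eta x)^2" for x
  have hs: "h xstar \<noteq> \<infinity>" using opt[of x0] hx0 by (cases "h x0"; cases "h xstar") auto
  have Fopt: "Fr xstar \<le> Fr z" if "h z \<noteq> \<infinity>" for z
    using opt[of z] that hs nm[of z] nm[of xstar] unfolding Fr_def
    by (cases "h z"; cases "h xstar") auto
  note tp = traj_props[OF hx0, of T]
  have fin: "finite (set_pmf (traj x0 T))" using tp by blast
  have sup: "\<And>z. z \<in> set_pmf (traj x0 T) \<Longrightarrow> h (fst (snd z)) \<noteq> \<infinity> \<and> length (fst z) = T" using tp by blast
  have E: "measure_pmf.expectation (traj x0 T) (\<lambda>z. Phi (snd z) + (eta/2) * SG (fst z)) \<le> Fr x0" using tp by blast
  have Tne: "{..<T} \<noteq> {}" using T lessThan_empty_iff by (metis not_one_le_zero)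
  have "measure_pmf.expectation (prox_saga n b eta gf h x0 T) g
      = measure_pmf.expectation (traj x0 T) (\<lambda>z. measure_pmf.expectation (pmf_of_set {..<T}) (\<lambda>k. g (fst z ! k)))"
    unfolding prox_saga_def using fin
    by (subst exp_bind_fin) (auto simp: case_prod_beta set_pmf_of_set[OF Tne])
  also have "\<dots> \<le> measure_pmf.expectation (traj x0 T) (\<lambda>z. 0 + (1 / real T) * SG (fst z))"
  proof (rule exp_mono_fin[OF fin])
    fix z assume z: "z \<in> set_pmf (traj x0 T)"
    have "measure_pmf.expectation (pmf_of_set {..<T}) (\<lambda>k. g (fst z ! k)) = (\<Sum>k<T. g (fst z ! k)) / real T"
      using T by (rule exp_U)
    also have "(\<Sum>k<T. g (fst z ! k)) = SG (fst z)"
      unfolding SG_def g_def[symmetric] using sup[OF z]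
      by (simp add: sum_list_sum_nth atLeast0LessThan)
    finally show "measure_pmf.expectation (pmf_of_set {..<T}) (\<lambda>k. g (fst z ! k)) \<le> 0 + (1 / real T) * SG (fst z)"
      by simp
  qed
  also have "\<dots> = 0 + (1 / real T) * measure_pmf.expectation (traj x0 T) (\<lambda>z. SG (fst z))"
    using fin by (rule exp_affine)
  finally have A: "measure_pmf.expectation (prox_saga n b eta gf h x0 T) g \<le> (1 / real T) * measure_pmf.expectation (traj x0 T) (\<lambda>z. SG (fst z))"
    by simp
  have "Fr xstar + (eta/2) * measure_pmf.expectation (traj x0 T) (\<lambda>z. SG (fst z))
      = measure_pmf.expectation (traj x0 T) (\<lambda>z. Fr xstar + (eta/2) * SG (fst z))"
    using fin by (rule exp_affine[symmetric])
  also have "\<dots> \<le> measure_pmf.expectation (traj x0 T) (\<lambda>z. Phi (snd z) + (eta/2) * SG (fst z))"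
  proof (rule exp_mono_fin[OF fin])
    fix z assume z: "z \<in> set_pmf (traj x0 T)"
    have "Fr xstar \<le> Fr (fst (snd z))" using sup[OF z] Fopt by blast
    moreover have "0 \<le> cc * Dv (snd z)" using cc_nonneg unfolding Dv_def by (intro mult_nonneg_nonneg sum_nonneg) auto
    ultimately show "Fr xstar + (eta/2) * SG (fst z) \<le> Phi (snd z) + (eta/2) * SG (fst z)"
      unfolding Phi_def by simp
  qed
  also have "\<dots> \<le> Fr x0" by (rule E)
  finally have B: "measure_pmf.expectation (traj x0 T) (\<lambda>z. SG (fst z)) \<le> (Fr x0 - Fr xstar) / (eta/2)"
    using eta_pos by (simp add: field_simps)
  have D0: "Fr x0 - Fr xstar \<ge> 0" using Fopt hx0 by simp
  have "(1 / real T) * measure_pmf.expectation (traj x0 T) (\<lambda>z. SG (fst z)) \<le> (1 / real T) * ((Fr x0 - Fr xstar) / (eta/2))"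
    using B T by (intro mult_left_mono) auto
  also have "\<dots> = (2 * L / (\<rho> * real T)) * (Fr x0 - Fr xstar)"
    unfolding eta_def using Lp rho0 T by (simp add: field_simps)
  also have "\<dots> \<le> (2 * L / (\<rho> * (1 - 2 * \<rho>) * real T)) * (Fr x0 - Fr xstar)"
  proof (rule mult_right_mono[OF _ D0])
    have "\<rho> * (1 - 2 * \<rho>) * real T \<le> \<rho> * real T" using rho0 rho1 T by (simp add: mult_le_cancel_left1 mult_le_cancel_right1 algebra_simps)
    moreover have "0 < \<rho> * (1 - 2 * \<rho>) * real T" using rho0 rho1 T by simp
    ultimately show "2 * L / (\<rho> * real T) \<le> 2 * L / (\<rho> * (1 - 2 * \<rho>) * real T)"
      using Lp by (intro divide_left_mono) auto
  qed
  finally show ?thesis using A unfolding g_def by linarith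
qed

end


theorem theorem6:
  fixes n b T :: nat and L \<rho> :: real
    and f :: "nat \<Rightarrow> 'a::euclidean_space \<Rightarrow> real" and gf :: "nat \<Rightarrow> 'a \<Rightarrow> 'a"
    and h :: "'a \<Rightarrow> ereal" and x0 xstar :: 'a
  assumes "n \<ge> 1" and "1 \<le> b" and "b \<le> n" and "T \<ge> 1"
    and "L > 0"
    and grad: "\<And>i x. i < n \<Longrightarrow> GDERIV (f i) x :> gf i x"
    and smooth: "\<And>i x y. i < n \<Longrightarrow> norm (gf i x - gf i y) \<le> L * norm (x - y)"
    and "proper_fun h" and "lsc_fun h" and "convex_ereal_fun h" and "closed (edom h)"
    and opt: "\<And>x. ereal ((1 / real n) * (\<Sum>i<n. f i xstar)) + h xstar
                    \<le> ereal ((1 / real n) * (\<Sum>i<n. f i x)) + h x"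
    and "0 < \<rho>" and "\<rho> < 1/2"
    and "16 * real n ^ 2 * \<rho> ^ 2 / real b ^ 3 + \<rho> \<le> 1"
  shows "ereal (measure_pmf.expectation (prox_saga n b (\<rho> / L) gf h x0 T)
                  (\<lambda>x. norm (grad_map n gf h (\<rho> / L) x) ^ 2))
         \<le> ereal (2 * L / (\<rho> * (1 - 2 * \<rho>) * real T))
            * ((ereal ((1 / real n) * (\<Sum>i<n. f i x0)) + h x0)
               - (ereal ((1 / real n) * (\<Sum>i<n. f i xstar)) + h xstar))"
proof -
  interpret S: saga h n b L \<rho> f gf
    using assms by unfold_locales auto
  have eta: "\<rho> / L = S.eta" unfolding S.eta_def ..
  have fa: "(1 / real n) * (\<Sum>i<n. f i x) = S.fa x" for x unfolding S.fa_def ..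
  obtain z0 where z0: "h z0 \<noteq> \<infinity>" using assms(8) unfolding proper_fun_def by auto
  have hs: "h xstar \<noteq> \<infinity>" using opt[of z0] z0 by (cases "h z0"; cases "h xstar") auto
  obtain hst where hst: "h xstar = ereal hst" using hs S.nm[of xstar] by (cases "h xstar") auto
  have pos: "0 < 2 * L / (\<rho> * (1 - 2 * \<rho>) * real T)" using assms by simp
  show ?thesis
  proof (cases "h x0 = \<infinity>")
    case True
    have r: "ereal (2 * L / (\<rho> * (1 - 2 * \<rho>) * real T))
            * ((ereal ((1 / real n) * (\<Sum>i<n. f i x0)) + h x0)
               - (ereal ((1 / real n) * (\<Sum>i<n. f i xstar)) + h xstar)) = \<infinity>"
      using True hst pos assms(4,5,13,14) by simp
    show ?thesis by (simp only: r) simp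
  next
    case False
    obtain hx where hx: "h x0 = ereal hx" using False S.nm[of x0] by (cases "h x0") auto
    have "measure_pmf.expectation (prox_saga n b S.eta gf h x0 T) (\<lambda>x. norm (grad_map n gf h S.eta x)^2)
      \<le> 2 * L / (\<rho> * (1 - 2 * \<rho>) * real T) * (S.Fr x0 - S.Fr xstar)"
      using S.final_bound[OF False assms(4)] opt unfolding fa by blast
    thus ?thesis unfolding eta fa S.Fr_def using hx hst by simp
  qed
qed


end
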